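(* Let $n$ be an odd positive integer and let $a,b$ be distinct integers with $0<a,b<n$, so that $G=C_{2n}(a,b,n)$ is a $5$-regular circulant graph. If $a$ and $b$ have the same parity (both even or both odd), then $G$ is word-representable.
   Context: Two distinct letters $x,y$ alternate in a word $w$ if, after deleting all other letters from $w$, the resulting word is of the form $xyxy\cdots$ or $yxyx\cdots$ (of even or odd length). A graph $G=(V,E)$ is word-representable if there is a word $w$ over the alphabet $V$, containing every letter of $V$ at least once, such that for all distinct $x,y\in V$, $xy\in E$ if and only if $x$ and $y$ alternate in $w$. For an integer $m$ and a set $R$ of positive integers each at most $m/2$, the circulant graph $C_m(R)$ has vertex set $\{0,1,\dots,m-1\}$, with $i$ and $j$ adjacent iff $\min(|i-j|,\,m-|i-j|)\in R$. $C_{2n}(a,b,n)$ denotes the circulant graph on $2n$ vertices with jump set $\{a,b,n\}$. *)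

theory Defs
  imports Main
begin

definition alternate :: "'a list \<Rightarrow> 'a \<Rightarrow> 'a \<Rightarrow> bool" where
  "alternate w x y \<longleftrightarrow>
     (let u = filter (\<lambda>c. c = x \<or> c = y) w in
      \<forall>i. Suc i < length u \<longrightarrow> u ! i \<noteq> u ! Suc i)"

definition word_representable :: "'a set \<Rightarrow> ('a \<Rightarrow> 'a \<Rightarrow> bool) \<Rightarrow> bool" where
  "word_representable V E \<longleftrightarrow>
     (\<exists>w. set w = V \<and>
          (\<forall>x\<in>V. \<forall>y\<in>V. x \<noteq> y \<longrightarrow> (E x y \<longleftrightarrow> alternate w x y)))"

definition circ_dist :: "nat \<Rightarrow> nat \<Rightarrow> nat \<Rightarrow> nat" where
  "circ_dist m i j = (let d = (if i \<le> j then j - i else i - j) in min d (m - d))"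

definition circulant_adj :: "nat \<Rightarrow> nat set \<Rightarrow> nat \<Rightarrow> nat \<Rightarrow> bool" where
  "circulant_adj m R i j \<longleftrightarrow> circ_dist m i j \<in> R"

end

theory Submission
  imports Defs
begin


fun adjd :: "'a list \<Rightarrow> bool" where
  "adjd (p # q # r) = (p = q \<or> adjd (q # r))"
| "adjd _ = False"

lemma adjd_iff: "adjd u \<longleftrightarrow> (\<exists>i. Suc i < length u \<and> u ! i = u ! Suc i)"
proof (induction u rule: adjd.induct)
  case (1 p q r)
  show ?case
  proof
    assume "adjd (p # q # r)"
    then consider "p = q" | "adjd (q # r)" by auto
    then show "\<exists>i. Suc i < length (p # q # r) \<and> (p # q # r) ! i = (p # q # r) ! Suc i"
    proof cases
      case 1 then show ?thesis by (rule_tac x=0 in exI) auto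
    next
      case 2
      then obtain i where "Suc i < length (q # r)" "(q # r) ! i = (q # r) ! Suc i" using "1.IH" by blast
      then show ?thesis by (rule_tac x="Suc i" in exI) auto
    qed
  next
    assume "\<exists>i. Suc i < length (p # q # r) \<and> (p # q # r) ! i = (p # q # r) ! Suc i"
    then obtain i where i: "Suc i < length (p # q # r)" "(p # q # r) ! i = (p # q # r) ! Suc i" by blast
    show "adjd (p # q # r)"
    proof (cases i)
      case 0 then show ?thesis using i by simp
    next
      case (Suc j)
      then have "adjd (q # r)" using "1.IH" i by (rule_tac iffD2[OF "1.IH"]) (rule_tac x=j in exI, auto)
      then show ?thesis by simp
    qed
  qed
next
  case "2_1" then show ?case by simp
next
  case ("2_2" v) then show ?case by simp
qed

lemma alternate_adjd: "alternate w x y \<longleftrightarrow> \<not> adjd (filter (\<lambda>c. c = x \<or> c = y) w)"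
  unfolding alternate_def Let_def adjd_iff by auto

lemma adjd_append1: "adjd xs \<Longrightarrow> adjd (xs @ ys)"
  by (induction xs rule: adjd.induct) auto

lemma adjd_append2: "adjd ys \<Longrightarrow> adjd (xs @ ys)"
proof (induction xs)
  case Nil then show ?case by simp
next
  case (Cons z zs)
  then show ?case by (cases "zs @ ys") auto
qed

lemma adjd_concat: "xs \<in> set xss \<Longrightarrow> adjd xs \<Longrightarrow> adjd (concat xss)"
proof (induction xss)
  case Nil then show ?case by simp
next
  case (Cons a xss)
  then show ?case using adjd_append1 adjd_append2 by fastforce
qed

lemma not_adjd_rep: "u \<noteq> v \<Longrightarrow> \<not> adjd (concat (replicate k [u, v]))"
proof (induction k)
  case 0 then show ?case by simp
next
  case (Suc k)
  then show ?case by (cases k) auto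
qed

lemma concat_rep2: "concat (map (\<lambda>p. [u, v, u, v]) ps) = concat (replicate (2 * length ps) [u, v])"
  by (induction ps) auto

definition bw :: "'a list \<Rightarrow> ('a \<Rightarrow> nat) \<Rightarrow> 'a list" where
  "bw P cl = filter (\<lambda>v. cl v \<noteq> 2) P @ filter (\<lambda>v. cl v \<noteq> 1) P @ filter (\<lambda>v. cl v \<noteq> 0) P"

lemma filter_bw: "filter Q (bw P cl) = bw (filter Q P) cl"
  unfolding bw_def by (simp add: filter_filter conj_commute)

lemma filter_two:
  assumes "distinct P" "sorted (map \<kappa> P)" "u \<in> set P" "v \<in> set P" "(\<kappa> u :: int) < \<kappa> v"
  shows "filter (\<lambda>c. c = u \<or> c = v) P = [u, v]"
  using assms
proof (induction P)
  case Nil then show ?case by simp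
next
  case (Cons z zs)
  have uv: "u \<noteq> v" using Cons.prems by auto
  show ?case
  proof (cases "z = u")
    case True
    then have "u \<notin> set zs" using Cons.prems by auto
    moreover have "v \<in> set zs" using Cons.prems uv True by auto
    moreover have "distinct zs" using Cons.prems by auto
    ultimately have "filter (\<lambda>c. c = u \<or> c = v) zs = [v]"
    proof -
      assume a: "u \<notin> set zs" "v \<in> set zs" "distinct zs"
      have "filter (\<lambda>c. c = u \<or> c = v) zs = filter (\<lambda>c. c = v) zs"
        using a(1) by (intro filter_cong) auto
      also have "\<dots> = [v]" using a(2,3)
        by (induction zs) (auto simp: filter_empty_conv)
      finally show ?thesis .
    qed
    then show ?thesis using True by simp
  next
    case False
    show ?thesis
    proof (cases "z = v")
      case True
      then have "u \<in> set zs" using Cons.prems False by auto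
      then have "\<kappa> z \<le> \<kappa> u" using Cons.prems(2) by auto
      then show ?thesis using True Cons.prems by auto
    next
      case False2: False
      then have "filter (\<lambda>c. c = u \<or> c = v) zs = [u, v]"
        using Cons.IH Cons.prems False by auto
      then show ?thesis using False False2 by simp
    qed
  qed
qed

definition edgeok :: "'a set \<Rightarrow> ('a \<Rightarrow> 'a \<Rightarrow> bool) \<Rightarrow> ('a \<Rightarrow> int) \<Rightarrow> ('a \<Rightarrow> nat) \<Rightarrow> bool" where
  "edgeok V E \<kappa> cl \<longleftrightarrow> (\<forall>v\<in>V. cl v \<le> 2) \<and>
     (\<forall>u\<in>V. \<forall>v\<in>V. E u v \<longrightarrow> \<kappa> u < \<kappa> v \<longrightarrow> cl v = cl u \<or> cl v = Suc (cl u))"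

definition brk :: "('a \<Rightarrow> nat) \<Rightarrow> 'a \<Rightarrow> 'a \<Rightarrow> bool" where
  "brk cl x y \<longleftrightarrow> (cl x = 0 \<and> cl y = 2) \<or> (cl x = 1 \<and> cl y = 0) \<or> (cl x = 2 \<and> cl y = 1)"

lemma core:
  fixes V :: "'a::linorder set" and E :: "'a \<Rightarrow> 'a \<Rightarrow> bool" and \<kappa> :: "'a \<Rightarrow> int"
  assumes fin: "finite V" and inj: "inj_on \<kappa> V"
    and sym: "\<And>x y. E x y \<Longrightarrow> E y x"
    and cert: "\<And>x y. x \<in> V \<Longrightarrow> y \<in> V \<Longrightarrow> x \<noteq> y \<Longrightarrow> \<not> E x y \<Longrightarrow> \<kappa> x < \<kappa> y \<Longrightarrow>
                 \<exists>cl. edgeok V E \<kappa> cl \<and> brk cl x y"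
  shows "word_representable V E"
proof -
  define P where "P = sort_key \<kappa> (sorted_list_of_set V)"
  have setP: "set P = V" unfolding P_def using fin by simp
  have distP: "distinct P" unfolding P_def by simp
  have sortP: "sorted (map \<kappa> P)" unfolding P_def by simp
  define prs where "prs = filter (\<lambda>(x, y). x \<noteq> y \<and> \<not> E x y \<and> \<kappa> x < \<kappa> y) (List.product P P)"
  define C where "C = (\<lambda>p. SOME cl. edgeok V E \<kappa> cl \<and> brk cl (fst p) (snd p))"
  define W where "W = P @ concat (map (\<lambda>p. bw P (C p)) prs)"
  have Cgood: "edgeok V E \<kappa> (C p) \<and> brk (C p) (fst p) (snd p)" if "p \<in> set prs" for p
  proof -
    obtain x y where p: "p = (x, y)" by (cases p)
    have "x \<in> V" "y \<in> V" "x \<noteq> y" "\<not> E x y" "\<kappa> x < \<kappa> y"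
      using that setP unfolding prs_def p by auto
    then have "\<exists>cl. edgeok V E \<kappa> cl \<and> brk cl x y" using cert by blast
    then show ?thesis unfolding C_def p using someI_ex[where P="\<lambda>cl. edgeok V E \<kappa> cl \<and> brk cl x y"] by simp
  qed
  have filt: "filter (\<lambda>c. c = u \<or> c = v) W = [u, v] @ concat (map (\<lambda>p. bw [u, v] (C p)) prs)"
    if "u \<in> V" "v \<in> V" "\<kappa> u < \<kappa> v" for u v
  proof -
    have f2: "filter (\<lambda>c. c = u \<or> c = v) P = [u, v]"
      using filter_two[OF distP sortP] that setP by auto
    show ?thesis unfolding W_def by (simp add: filter_concat filter_bw f2 comp_def)
  qed
  have main: "E u v \<longleftrightarrow> alternate W u v" if "u \<in> V" "v \<in> V" "\<kappa> u < \<kappa> v" for u v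
  proof
    assume e: "E u v"
    have uv: "u \<noteq> v" using that by auto
    have "bw [u, v] (C p) = [u, v, u, v]" if "p \<in> set prs" for p
    proof -
      have ok: "edgeok V E \<kappa> (C p)" using Cgood[OF that] by simp
      then have "C p v = C p u \<or> C p v = Suc (C p u)" "C p u \<le> 2" "C p v \<le> 2"
        using \<open>u \<in> V\<close> \<open>v \<in> V\<close> \<open>\<kappa> u < \<kappa> v\<close> e unfolding edgeok_def by auto
      then show ?thesis unfolding bw_def using uv by (cases "C p u"; cases "C p v") (auto simp: numeral_2_eq_2)
    qed
    then have "concat (map (\<lambda>p. bw [u, v] (C p)) prs) = concat (map (\<lambda>p. [u, v, u, v]) prs)"
      by (intro arg_cong[where f=concat] map_cong) auto
    then have "filter (\<lambda>c. c = u \<or> c = v) W = concat (replicate (Suc (2 * length prs)) [u, v])"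
      using filt[OF that] by (simp add: concat_rep2)
    then show "alternate W u v" unfolding alternate_adjd using not_adjd_rep[OF uv, of "Suc (2 * length prs)"] by argo
  next
    assume a: "alternate W u v"
    show "E u v"
    proof (rule ccontr)
      assume ne: "\<not> E u v"
      have uv: "u \<noteq> v" using that by auto
      have pin: "(u, v) \<in> set prs" unfolding prs_def using that setP ne uv by auto
      have b: "brk (C (u, v)) u v" using Cgood[OF pin] by simp
      have "adjd (bw [u, v] (C (u, v)))"
        using b uv unfolding brk_def bw_def by auto
      then have "adjd (concat (map (\<lambda>p. bw [u, v] (C p)) prs))"
        using pin by (intro adjd_concat[of "bw [u, v] (C (u, v))"]) auto
      then have "adjd (filter (\<lambda>c. c = u \<or> c = v) W)"
        using filt[OF that] adjd_append2 by metis
      then show False using a unfolding alternate_adjd by simp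
    qed
  qed
  have "\<forall>x\<in>V. \<forall>y\<in>V. x \<noteq> y \<longrightarrow> (E x y \<longleftrightarrow> alternate W x y)"
  proof (intro ballI impI)
    fix x y assume xy: "x \<in> V" "y \<in> V" "x \<noteq> y"
    have "\<kappa> x \<noteq> \<kappa> y" using inj xy unfolding inj_on_def by auto
    then consider "\<kappa> x < \<kappa> y" | "\<kappa> y < \<kappa> x" by linarith
    then show "E x y \<longleftrightarrow> alternate W x y"
    proof cases
      case 1 then show ?thesis using main xy by auto
    next
      case 2
      have "alternate W x y = alternate W y x" unfolding alternate_def Let_def
        by (metis (no_types, lifting) disj_commute filter_cong)
      then show ?thesis using main[of y x] xy 2 sym by auto
    qed
  qed
  moreover have "set W = V" unfolding W_def using setP by (auto simp: bw_def)
  ultimately show ?thesis unfolding word_representable_def by blast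
qed



lemma height_wr:
  fixes V :: "'a::linorder set" and E :: "'a \<Rightarrow> 'a \<Rightarrow> bool" and h \<kappa> :: "'a \<Rightarrow> int" and N :: int
  assumes fin: "finite V" and inj: "inj_on \<kappa> V"
    and mono: "\<And>u v. u \<in> V \<Longrightarrow> v \<in> V \<Longrightarrow> h u < h v \<Longrightarrow> \<kappa> u < \<kappa> v"
    and sym: "\<And>x y. E x y \<Longrightarrow> E y x"
    and Npos: "0 < N"
    and edge: "\<And>u v. u \<in> V \<Longrightarrow> v \<in> V \<Longrightarrow> E u v \<Longrightarrow> N < 4 * \<bar>h u - h v\<bar> \<and> 4 * \<bar>h u - h v\<bar> < 3 * N"
  shows "word_representable V E"
proof (rule core[OF fin inj sym])
  have ori: "h u < h v \<and> N < 4 * (h v - h u) \<and> 4 * (h v - h u) < 3 * N"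
    if "u \<in> V" "v \<in> V" "E u v" "\<kappa> u < \<kappa> v" for u v
  proof -
    have e: "N < 4 * \<bar>h u - h v\<bar>" "4 * \<bar>h u - h v\<bar> < 3 * N" using edge that by auto
    have "\<not> h v < h u" using mono[of v u] that by auto
    moreover have "h u \<noteq> h v" using e Npos by auto
    ultimately have "h u < h v" by auto
    then show ?thesis using e by auto
  qed
  have edge2: "N < 4 * (h v - h u) \<and> 4 * (h v - h u) < 3 * N"
    if "u \<in> V" "v \<in> V" "E u v" "h u < h v" for u v
    using edge[OF that(1-3)] that(4) by auto
  fix x y assume xV: "x \<in> V" and yV: "y \<in> V" and xy: "x \<noteq> y" and ne: "\<not> E x y" and k: "\<kappa> x < \<kappa> y"
  have hxy: "h x \<le> h y" using mono[OF yV xV] k by force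
  show "\<exists>cl. edgeok V E \<kappa> cl \<and> brk cl x y"
  proof (cases "2 * (h y - h x) \<le> N")
    case True
    define S where "S = (\<lambda>v. v = x \<or> (E x v \<and> h x < h v) \<or> N < 2 * (h v - h x))"
    define cl where "cl = (\<lambda>v. if S v then 1 else 0 :: nat)"
    have clos: "S v" if "S u" "u \<in> V" "v \<in> V" "E u v" "\<kappa> u < \<kappa> v" for u v
    proof -
      have o: "h u < h v" "N < 4 * (h v - h u)" using ori[OF that(2-5)] by auto
      from that(1) consider "u = x" | "E x u \<and> h x < h u" | "N < 2 * (h u - h x)" unfolding S_def by auto
      then show ?thesis
      proof cases
        case 1 then show ?thesis using o that unfolding S_def by auto
      next
        case 2
        have "N < 4 * (h u - h x)" using edge2[OF xV that(2)] 2 by auto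
        then show ?thesis using o unfolding S_def by auto
      next
        case 3 then show ?thesis using o unfolding S_def by auto
      qed
    qed
    have "edgeok V E \<kappa> cl"
      unfolding edgeok_def cl_def using clos by auto
    moreover have "brk cl x y" unfolding brk_def cl_def S_def using True xy ne by auto
    ultimately show ?thesis by blast
  next
    case False
    define J where "J = (\<lambda>v. v = x \<or> (E v x \<and> h v < h x) \<or> N < 2 * (h x - h v))"
    define I where "I = (\<lambda>v. v = y \<or> (E y v \<and> h y < h v) \<or> N < 2 * (h v - h y))"
    define cl where "cl = (\<lambda>v. if J v then 0 else if I v then 2 else 1 :: nat)"
    have noJI: "False" if "J u" "I v" "u \<in> V" "v \<in> V" "E u v" "\<kappa> u < \<kappa> v" for u v
    proof -
      have o: "4 * (h v - h u) < 3 * N" using ori[OF that(3-6)] by auto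
      have A: "N < 4 * (h x - h u) \<or> u = x"
      proof -
        from that(1) consider "u = x" | "E u x \<and> h u < h x" | "N < 2 * (h x - h u)" unfolding J_def by auto
        then show ?thesis
        proof cases
          case 2 then show ?thesis using edge2[OF that(3) xV] by auto
        qed (use Npos in auto)
      qed
      have B: "N < 4 * (h v - h y) \<or> v = y"
      proof -
        from that(2) consider "v = y" | "E y v \<and> h y < h v" | "N < 2 * (h v - h y)" unfolding I_def by auto
        then show ?thesis
        proof cases
          case 2 then show ?thesis using edge2[OF yV that(4)] by auto
        qed (use Npos in auto)
      qed
      show False
      proof (cases "u = x \<and> v = y")
        case True then show ?thesis using ne that by auto
      next
        case False
        note nn = \<open>\<not> 2 * (h y - h x) \<le> N\<close>
        from A B False show ?thesis
        proof (elim disjE)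
          assume "N < 4 * (h x - h u)" "N < 4 * (h v - h y)"
          then show False using o nn Npos by (simp add: algebra_simps)
        next
          assume "N < 4 * (h x - h u)" "v = y"
          then show False using o nn Npos by simp
        next
          assume "u = x" "N < 4 * (h v - h y)"
          then show False using o nn Npos by simp
        qed auto
      qed
    qed
    have closJ: "J u" if "J v" "u \<in> V" "v \<in> V" "E u v" "\<kappa> u < \<kappa> v" for u v
    proof -
      have o: "h u < h v" "N < 4 * (h v - h u)" using ori[OF that(2-5)] by auto
      from that(1) consider "v = x" | "E v x \<and> h v < h x" | "N < 2 * (h x - h v)" unfolding J_def by auto
      then show ?thesis
      proof cases
        case 1 then show ?thesis using o that unfolding J_def by auto
      next
        case 2
        have "N < 4 * (h x - h v)" using edge2[OF that(3) xV] 2 by auto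
        then show ?thesis using o unfolding J_def by auto
      next
        case 3 then show ?thesis using o unfolding J_def by auto
      qed
    qed
    have closI: "I v" if "I u" "u \<in> V" "v \<in> V" "E u v" "\<kappa> u < \<kappa> v" for u v
    proof -
      have o: "h u < h v" "N < 4 * (h v - h u)" using ori[OF that(2-5)] by auto
      from that(1) consider "u = y" | "E y u \<and> h y < h u" | "N < 2 * (h u - h y)" unfolding I_def by auto
      then show ?thesis
      proof cases
        case 1 then show ?thesis using o that unfolding I_def by auto
      next
        case 2
        have "N < 4 * (h u - h y)" using edge2[OF yV that(2)] 2 by auto
        then show ?thesis using o unfolding I_def by auto
      next
        case 3 then show ?thesis using o unfolding I_def by auto
      qed
    qed
    have "edgeok V E \<kappa> cl"
      unfolding edgeok_def
    proof (intro conjI ballI impI)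
      fix v assume "v \<in> V" then show "cl v \<le> 2" unfolding cl_def by auto
    next
      fix u v assume uv: "u \<in> V" "v \<in> V" "E u v" "\<kappa> u < \<kappa> v"
      show "cl v = cl u \<or> cl v = Suc (cl u)"
        using noJI[OF _ _ uv] closJ[OF _ uv] closI[OF _ uv] unfolding cl_def by auto
    qed
    moreover have "brk cl x y"
    proof -
      have "J x" unfolding J_def by simp
      moreover have "\<not> J y" unfolding J_def using xy ne sym hxy Npos by auto
      moreover have "I y" unfolding I_def by simp
      ultimately show ?thesis unfolding brk_def cl_def by auto
    qed
    ultimately show ?thesis by blast
  qed
qed



lemma circ_dist_sym: "circ_dist m i j = circ_dist m j i"
  unfolding circ_dist_def Let_def by auto

lemma circ_adj_sym: "circulant_adj m R i j \<Longrightarrow> circulant_adj m R j i"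
  unfolding circulant_adj_def using circ_dist_sym by metis

lemma circ_dist_cong:
  assumes "i < m" "j < m"
  shows "(int i - int j) mod int m = int (circ_dist m i j) mod int m \<or>
         (int i - int j) mod int m = (- int (circ_dist m i j)) mod int m"
proof -
  define dd where "dd = (if i \<le> j then j - i else i - j)"
  have cd: "circ_dist m i j = min dd (m - dd)" unfolding circ_dist_def dd_def Let_def by simp
  have ddm: "dd \<le> m" unfolding dd_def using assms by auto
  have e: "int i - int j = int dd \<or> int i - int j = - int dd" unfolding dd_def by auto
  consider "circ_dist m i j = dd" | "circ_dist m i j = m - dd" using cd by linarith
  then show ?thesis
  proof cases
    case 1 then show ?thesis using e by auto
  next
    case 2
    then have c: "int (circ_dist m i j) = int m - int dd" using ddm by simp
    from e show ?thesis
    proof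
      assume "int i - int j = int dd"
      then have "int i - int j = (- int (circ_dist m i j)) + int m" using c by simp
      then show ?thesis by simp
    next
      assume "int i - int j = - int dd"
      then have "int i - int j = int (circ_dist m i j) + (- 1) * int m" using c by simp
      then have "(int i - int j) mod int m = (int (circ_dist m i j) + (- 1) * int m) mod int m" by simp
      also have "\<dots> = int (circ_dist m i j) mod int m" by (rule mod_mult_self1)
      finally show ?thesis by simp
    qed
  qed
qed

lemma diff_mod_cases:
  fixes x y m r :: int
  assumes "0 \<le> x" "x < m" "0 \<le> y" "y < m" "(x - y) mod m = r"
  shows "x - y = r \<or> x - y = r - m"
proof -
  have m: "0 < m" using assms by auto
  have eq: "x - y = m * ((x - y) div m) + r" using div_mult_mod_eq[of "x - y" m] assms(5) by (simp add: mult.commute)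
  have r: "0 \<le> r" "r < m" using assms(5) m by auto
  have "(x - y) div m \<le> 0"
  proof (rule ccontr)
    assume "\<not> ?thesis"
    then have "1 \<le> (x - y) div m" by simp
    then have "m \<le> m * ((x - y) div m)" using m by simp
    then show False using eq r assms by linarith
  qed
  moreover have "(x - y) div m \<ge> -1"
  proof (rule ccontr)
    assume "\<not> ?thesis"
    then have "(x - y) div m \<le> -2" by simp
    then have "m * ((x - y) div m) \<le> m * (-2)" using m by (intro mult_left_mono) auto
    then show False using eq r assms by linarith
  qed
  ultimately have "(x - y) div m = 0 \<or> (x - y) div m = -1" by linarith
  then show ?thesis using eq by auto
qed

lemma circ_wr:
  fixes n a b :: nat and t :: int
  assumes npos: "0 < n"
    and tc: "\<And>d. d \<in> {a, b, n} \<Longrightarrow> 2 * int n < 4 * ((int d * t) mod (2 * int n)) \<and>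
                                    4 * ((int d * t) mod (2 * int n)) < 6 * int n"
  shows "word_representable {0..<2*n} (circulant_adj (2*n) {a, b, n})"
proof -
  define m where "m = 2 * int n"
  have mpos: "0 < m" unfolding m_def using npos by simp
  define h where "h = (\<lambda>v::nat. (int v * t) mod m)"
  define \<kappa> where "\<kappa> = (\<lambda>v::nat. h v * m + int v)"
  have h0: "0 \<le> h v" "h v < m" for v unfolding h_def using mpos by auto
  show ?thesis
  proof (rule height_wr[where h=h and \<kappa>=\<kappa> and N=m])
    show "finite {0..<2*n}" by simp
    show "inj_on \<kappa> {0..<2*n}"
    proof (rule inj_onI)
      fix u v assume uv: "u \<in> {0..<2*n}" "v \<in> {0..<2*n}" "\<kappa> u = \<kappa> v"
      have ub: "int u < m" "int v < m" using uv unfolding m_def by auto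
      have "h u = h v"
      proof (rule ccontr)
        assume "h u \<noteq> h v"
        then consider "h u < h v" | "h v < h u" by linarith
        then show False
        proof cases
          case 1
          then have "(h u + 1) * m \<le> h v * m" using mpos by (intro mult_right_mono) auto
          then show False using uv(3) ub unfolding \<kappa>_def by (simp add: algebra_simps)
        next
          case 2
          then have "(h v + 1) * m \<le> h u * m" using mpos by (intro mult_right_mono) auto
          then show False using uv(3) ub unfolding \<kappa>_def by (simp add: algebra_simps)
        qed
      qed
      then show "u = v" using uv(3) unfolding \<kappa>_def by simp
    qed
    show "\<kappa> u < \<kappa> v" if "u \<in> {0..<2*n}" "v \<in> {0..<2*n}" "h u < h v" for u v
    proof -
      have ub: "int u < m" using that unfolding m_def by auto
      have "(h u + 1) * m \<le> h v * m" using mpos that by (intro mult_right_mono) auto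
      then show ?thesis using ub unfolding \<kappa>_def by (simp add: algebra_simps)
    qed
    show "circulant_adj (2*n) {a, b, n} y x" if "circulant_adj (2*n) {a, b, n} x y" for x y
      using circ_adj_sym that by metis
    show "0 < m" by (rule mpos)
    show "m < 4 * \<bar>h u - h v\<bar> \<and> 4 * \<bar>h u - h v\<bar> < 3 * m"
      if uv: "u \<in> {0..<2*n}" "v \<in> {0..<2*n}" "circulant_adj (2*n) {a, b, n} u v" for u v
    proof -
      define d where "d = circ_dist (2*n) u v"
      have dR: "d \<in> {a, b, n}" using uv(3) unfolding circulant_adj_def d_def by simp
      define r where "r = (int d * t) mod m"
      have rb: "m < 4 * r" "4 * r < 3 * m" using tc[OF dR] unfolding r_def m_def by auto
      have r0: "0 \<le> r" "r < m" unfolding r_def using mpos by auto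
      have hd: "(h u - h v) mod m = ((int u - int v) * t) mod m"
        unfolding h_def by (simp add: mod_diff_eq left_diff_distrib)
      have cong: "(int u - int v) mod m = int d mod m \<or> (int u - int v) mod m = (- int d) mod m"
        using circ_dist_cong[of u "2*n" v] uv unfolding d_def m_def by auto
      have A: "((int u - int v) * t) mod m = (((int u - int v) mod m) * t) mod m"
        by (rule mod_mult_left_eq[symmetric])
      have "(h u - h v) mod m = r \<or> (h u - h v) mod m = (- (int d * t)) mod m"
        using cong
      proof
        assume c1: "(int u - int v) mod m = int d mod m"
        have "(h u - h v) mod m = ((int d mod m) * t) mod m" using hd A c1 by simp
        also have "\<dots> = (int d * t) mod m" by (rule mod_mult_left_eq)
        finally show ?thesis unfolding r_def by simp
      next
        assume c2: "(int u - int v) mod m = (- int d) mod m"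
        have "(h u - h v) mod m = (((- int d) mod m) * t) mod m" using hd A c2 by simp
        also have "\<dots> = ((- int d) * t) mod m" by (rule mod_mult_left_eq)
        finally show ?thesis by simp
      qed
      moreover have "(- (int d * t)) mod m = m - r"
      proof -
        have "r \<noteq> 0" using rb by auto
        then show ?thesis using zmod_zminus1_eq_if[of "int d * t" m] unfolding r_def by simp
      qed
      ultimately have cases2: "(h u - h v) mod m = r \<or> (h u - h v) mod m = m - r" by auto
      have D: "h u - h v = r \<or> h u - h v = r - m \<or> h u - h v = m - r \<or> h u - h v = - r"
        using cases2
      proof
        assume "(h u - h v) mod m = r"
        then show ?thesis using diff_mod_cases[OF h0(1)[of u] h0(2)[of u] h0(1)[of v] h0(2)[of v]] by blast
      next
        assume "(h u - h v) mod m = m - r"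
        then have "h u - h v = m - r \<or> h u - h v = m - r - m"
          using diff_mod_cases[OF h0(1)[of u] h0(2)[of u] h0(1)[of v] h0(2)[of v]] by blast
        then show ?thesis by auto
      qed
      have ab: "\<bar>h u - h v\<bar> = r \<or> \<bar>h u - h v\<bar> = m - r"
        using D r0 by auto
      then show ?thesis using rb by (elim disjE) (simp_all add: algebra_simps)
    qed
  qed
qed



definition inM :: "int \<Rightarrow> int \<Rightarrow> bool" where
  "inM q x \<longleftrightarrow> q < 4 * (x mod q) \<and> 4 * (x mod q) < 3 * q"

lemma inM_cong: "x mod q = y mod q \<Longrightarrow> inM q x = inM q y"
  unfolding inM_def by simp

lemma inM_neg:
  assumes "0 < q" "inM q x" shows "inM q (- x)"
proof -
  have nz: "x mod q \<noteq> 0" using assms unfolding inM_def by auto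
  have "(- x) mod q = q - x mod q" using zmod_zminus1_eq_if[of x q] nz by simp
  then show ?thesis using assms unfolding inM_def by (simp add: algebra_simps)
qed

lemma inM_scale:
  assumes "0 < g" shows "inM (g * q) (g * x) = inM q x"
proof -
  have "(g * x) mod (g * q) = g * (x mod q)" by (rule mod_mult_mult1)
  then show ?thesis unfolding inM_def using assms by (simp add: algebra_simps)
qed

lemma inM_interval: "0 \<le> z \<Longrightarrow> z < q \<Longrightarrow> q < 4 * z \<Longrightarrow> 4 * z < 3 * q \<Longrightarrow> inM q z"
  unfolding inM_def by simp

lemma walk:
  fixes q c :: int
  assumes q7: "7 \<le> q" and qodd: "odd q" and c2: "2 \<le> c" and cq: "2 * c \<le> q - 1"
  shows "\<exists>j. inM q j \<and> inM q (c * j)"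
proof -
  obtain L R where LR: "q < 4 * L" "4 * (L - 1) \<le> q" "4 * R < 3 * q" "3 * q \<le> 4 * (R + 1)"
    "c \<le> R - L + 1" "L \<le> 2 * (R - L)" "q + L - R - 1 \<le> 2 * (R - L)" "0 \<le> L" "R < q"
  proof -
    have "q mod 4 = 1 \<or> q mod 4 = 3" using qodd by presburger
    then show ?thesis
    proof
      assume h: "q mod 4 = 1"
      define r where "r = q div 4"
      have qr: "q = 4 * r + 1" using div_mult_mod_eq[of q 4] h unfolding r_def by linarith
      have "r \<ge> 2" using q7 qr by simp
      then show ?thesis using that[of "r + 1" "3 * r"] qr cq by simp
    next
      assume h: "q mod 4 = 3"
      define r where "r = q div 4"
      have qr: "q = 4 * r + 3" using div_mult_mod_eq[of q 4] h unfolding r_def by linarith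
      have "r \<ge> 1" using q7 qr by simp
      then show ?thesis using that[of "r + 1" "3 * r + 2"] qr cq by simp
    qed
  qed
  have qpos: "0 < q" using q7 by simp
  have inI: "inM q z" if "L \<le> z" "z \<le> R" for z
    using that LR by (intro inM_interval) auto
  define x0 where "x0 = (c * L) mod q"
  define k where "k = (c * L) div q"
  have cL: "c * L = k * q + x0" unfolding x0_def k_def by simp
  have x0b: "0 \<le> x0" "x0 < q" unfolding x0_def using qpos by auto
  show ?thesis
  proof (cases "L \<le> x0 \<and> x0 \<le> R")
    case True
    then have "inM q x0" using inI by auto
    moreover have "x0 mod q = (c * L) mod q" unfolding x0_def by simp
    ultimately have "inM q (c * L)" using inM_cong by blast
    moreover have "inM q L" using inI LR by auto
    ultimately show ?thesis by blast
  next
    case False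
    define kk where "kk = (if x0 < L then k else k + 1)"
    define A where "A = kk * q + L"
    have A1: "c * L < A" using cL x0b False LR unfolding A_def kk_def by (auto simp: algebra_simps)
    have A2: "A - c * L \<le> 2 * (R - L)"
      using cL x0b False LR unfolding A_def kk_def by (auto simp: algebra_simps)
    have "2 * (R - L) \<le> c * (R - L)" using c2 LR by (intro mult_right_mono) auto
    then have A3: "A \<le> c * R" using A2 by (simp add: algebra_simps)
    define j where "j = (A + c - 1) div c"
    have cpos: "0 < c" using c2 by simp
    have j1: "c * j \<le> A + c - 1"
    proof -
      have "A + c - 1 = c * j + (A + c - 1) mod c" unfolding j_def by simp
      moreover have "0 \<le> (A + c - 1) mod c" using cpos by simp
      ultimately show ?thesis by linarith
    qed
    have j2: "A + c - 1 < c * j + c"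
    proof -
      have "A + c - 1 = c * j + (A + c - 1) mod c" unfolding j_def by simp
      moreover have "(A + c - 1) mod c < c" using cpos by simp
      ultimately show ?thesis by linarith
    qed
    have jA: "A \<le> c * j" using j2 by simp
    have jL: "L \<le> j"
    proof -
      have "c * L < c * j" using A1 jA by simp
      then show ?thesis using cpos by simp
    qed
    have jR: "j \<le> R"
    proof -
      have "c * j < c * (R + 1)" using j1 A3 by (simp add: algebra_simps)
      then show ?thesis using cpos by simp
    qed
    have eqm: "(c * j - kk * q) mod q = (c * j) mod q"
    proof -
      have "c * j - kk * q = c * j + (- kk) * q" by simp
      then show ?thesis by (simp only: mod_mult_self1)
    qed
    have cj: "(c * j) mod q = c * j - kk * q"
    proof -
      have "0 \<le> c * j - kk * q" "c * j - kk * q < q" using jA j1 LR unfolding A_def by auto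
      then have "(c * j - kk * q) mod q = c * j - kk * q" by simp
      moreover have "(c * j - kk * q) mod q = (c * j) mod q"
      proof -
        have "c * j - kk * q = c * j + (- kk) * q" by simp
        then show ?thesis by (simp only: mod_mult_self1)
      qed
      ultimately show ?thesis by simp
    qed
    have "inM q (c * j)"
    proof -
      have "L \<le> c * j - kk * q" "c * j - kk * q \<le> R" using jA j1 LR unfolding A_def by auto
      then have "inM q (c * j - kk * q)" using inI by blast
      then show ?thesis using inM_cong[OF eqm] by simp
    qed
    then show ?thesis using inI jL jR by blast
  qed
qed



lemma inM_dvd: "n dvd (x - y) \<Longrightarrow> inM n y \<Longrightarrow> inM n x"
  using inM_cong[of x n y] mod_eq_dvd_iff[of x n y] by simp

lemma caseA:
  fixes n \<alpha> \<beta> :: int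
  assumes nodd: "odd n" and n1: "1 < n" and na: "\<not> n dvd \<alpha>"
    and nb: "\<not> n dvd (\<beta> * (n div gcd \<alpha> n))"
  shows "\<exists>s. inM n (\<alpha> * s) \<and> inM n (\<beta> * s)"
proof -
  define g where "g = gcd \<alpha> n"
  define q where "q = n div g"
  have gpos: "0 < g" unfolding g_def using n1 by (simp add: le_less)
  have nq: "n = g * q" unfolding q_def g_def by simp
  have qpos: "0 < q" using zero_less_mult_pos[of g q] nq gpos n1 by simp
  have qodd: "odd q" using nodd nq by auto
  have q1: "q \<noteq> 1"
  proof
    assume "q = 1"
    then have "n = g" using nq by simp
    then have "n dvd \<alpha>" unfolding g_def using gcd_dvd1[of \<alpha> n] by simp
    then show False using na by simp
  qed
  have q3: "3 \<le> q" using qpos qodd q1 by presburger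
  obtain u v where uv: "u * \<alpha> + v * n = g" using bezout_int[of \<alpha> n] unfolding g_def by blast
  obtain \<alpha>' where a': "\<alpha> = g * \<alpha>'" using gcd_dvd1[of \<alpha> n] unfolding g_def by (elim dvdE) simp
  have naq: "n dvd (\<alpha> * q)" using a' nq by (simp add: mult.assoc mult.left_commute)
  define j0 where "j0 = (q - 1) div 2"
  have j0e: "2 * j0 = q - 1" unfolding j0_def using qodd by (simp add: odd_two_times_div_two_succ)
  have inj0: "inM q j0" using j0e q3 by (intro inM_interval) auto
  have ing: "inM n (g * j0)" using inM_scale[OF gpos, of q j0] inj0 nq by simp
  define e where "e = gcd (\<beta> * q) n"
  have epos: "0 < e" unfolding e_def using n1 by (simp add: le_less)
  obtain w where nw: "n = e * w" using gcd_dvd2[of "\<beta> * q" n] unfolding e_def by (elim dvdE) simp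
  have wpos: "0 < w" using zero_less_mult_pos[of e w] nw epos n1 by simp
  have wodd: "odd w" using nodd nw by auto
  have w1: "w \<noteq> 1"
  proof
    assume "w = 1"
    then have "n = e" using nw by simp
    then have "n dvd \<beta> * q" unfolding e_def using gcd_dvd1[of "\<beta> * q" n] by simp
    then show False using nb unfolding q_def g_def by simp
  qed
  have w3: "3 \<le> w" using wpos wodd w1 by presburger
  have e3: "3 * e \<le> n" using nw w3 epos by (simp add: mult.commute)
  obtain k1 l1 where kl: "k1 * (\<beta> * q) + l1 * n = e" using bezout_int[of "\<beta> * q" n] unfolding e_def by blast
  define c0 where "c0 = \<beta> * u * j0"
  define L where "L = n div 4 + 1"
  have m4: "n mod 4 < 4" "0 \<le> n mod 4" "n div 4 * 4 + n mod 4 = n" by simp_all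
  have L1a: "n < 4 * L" using m4 unfolding L_def by (simp add: algebra_simps)
  have L1b: "4 * L \<le> n + 4" using m4 unfolding L_def by (simp add: algebra_simps)
  note L1 = L1a L1b
  define z where "z = L + (c0 - L) mod e"
  have z1: "L \<le> z" "z \<le> L + e - 1" unfolding z_def using epos by auto
  have inz: "inM n z" using z1 L1 e3 epos by (intro inM_interval) auto
  have "e dvd (c0 - L) - (c0 - L) mod e" by (simp add: minus_mod_eq_mult_div)
  then obtain w1 where "(c0 - L) - (c0 - L) mod e = e * w1" by (elim dvdE)
  define w2 where "w2 = - w1"
  then have w2: "z - c0 = e * w2" unfolding z_def using \<open>(c0 - L) - (c0 - L) mod e = e * w1\<close> by (simp add: algebra_simps)
  define s where "s = u * j0 + q * (k1 * w2)"
  have "\<alpha> * s - g * j0 = (u * \<alpha> - g) * j0 + (\<alpha> * q) * (k1 * w2)"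
    unfolding s_def by (simp add: algebra_simps)
  also have "\<dots> = (- (v * n)) * j0 + (\<alpha> * q) * (k1 * w2)"
  proof -
    have uv': "u * \<alpha> - g = - (v * n)" using uv by linarith
    show ?thesis by (simp only: uv')
  qed
  also have "\<dots> = (- v * j0) * n + (\<alpha> * q) * (k1 * w2)" by (simp add: algebra_simps)
  finally have d1: "n dvd (\<alpha> * s - g * j0)" using naq by simp
  have "\<beta> * s - z = (c0 - z) + (k1 * (\<beta> * q)) * w2"
    unfolding s_def c0_def by (simp add: algebra_simps)
  also have "\<dots> = - (e * w2) + (e - l1 * n) * w2"
  proof -
    have kl': "k1 * (\<beta> * q) = e - l1 * n" using kl by linarith
    have cz: "c0 - z = - (e * w2)" using w2 by linarith
    show ?thesis by (simp only: kl' cz)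
  qed
  also have "\<dots> = (- l1 * w2) * n" by (simp add: algebra_simps)
  finally have d2: "n dvd (\<beta> * s - z)" by simp
  show ?thesis using inM_dvd[OF d1 ing] inM_dvd[OF d2 inz] by blast
qed



lemma NTmain:
  fixes n \<alpha> \<beta> :: int
  assumes nodd: "odd n" and n1: "1 < n" and na: "\<not> n dvd \<alpha>" and nb: "\<not> n dvd \<beta>"
    and nab: "\<not> n dvd (\<alpha> - \<beta>)" and nab2: "\<not> n dvd (\<alpha> + \<beta>)"
  shows "(\<exists>s. inM n (\<alpha> * s) \<and> inM n (\<beta> * s)) \<or> (\<exists>g. n = 5 * g \<and> g dvd \<alpha> \<and> g dvd \<beta>)"
proof -
  define g where "g = gcd \<alpha> n"
  define q where "q = n div g"
  define g2 where "g2 = gcd \<beta> n"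
  define p where "p = n div g2"
  show ?thesis
  proof (cases "n dvd (\<beta> * q)")
    case False
    then show ?thesis using caseA[OF nodd n1 na] unfolding q_def g_def by blast
  next
    case Bq: True
    show ?thesis
    proof (cases "n dvd (\<alpha> * p)")
      case False
      then obtain s where "inM n (\<beta> * s) \<and> inM n (\<alpha> * s)"
        using caseA[OF nodd n1 nb, of \<alpha>] unfolding p_def g2_def by blast
      then show ?thesis by blast
    next
      case Ap: True
      have gpos: "0 < g" unfolding g_def using n1 by (simp add: le_less)
      have g2pos: "0 < g2" unfolding g2_def using n1 by (simp add: le_less)
      have nq: "n = g * q" unfolding q_def g_def by simp
      have np: "n = g2 * p" unfolding p_def g2_def by simp
      have qpos: "0 < q" using zero_less_mult_pos[of g q] nq gpos n1 by simp
      have ppos: "0 < p" using zero_less_mult_pos[of g2 p] np g2pos n1 by simp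
      have gb: "g dvd \<beta>"
      proof -
        have "g * q dvd \<beta> * q" using Bq nq by simp
        then show ?thesis using qpos by simp
      qed
      have g2a: "g2 dvd \<alpha>"
      proof -
        have "g2 * p dvd \<alpha> * p" using Ap np by simp
        then show ?thesis using ppos by simp
      qed
      have "g dvd g2" unfolding g2_def using gb gcd_dvd2[of \<alpha> n] unfolding g_def by (rule gcd_greatest)
      moreover have "g2 dvd g" unfolding g_def using g2a gcd_dvd2[of \<beta> n] unfolding g2_def by (rule gcd_greatest)
      ultimately have gg: "g = g2" using gpos g2pos by (simp add: zdvd_antisym_nonneg)
      obtain \<alpha>' where a': "\<alpha> = g * \<alpha>'" using gcd_dvd1[of \<alpha> n] unfolding g_def dvd_def by blast
      obtain \<beta>' where b': "\<beta> = g * \<beta>'" using gb unfolding dvd_def by blast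
      have copa: "gcd \<alpha>' q = 1"
      proof -
        have "g * gcd \<alpha>' q = gcd (g * \<alpha>') (g * q)" using gcd_mult_distrib_int[of g \<alpha>' q] gpos by simp
        also have "\<dots> = gcd \<alpha> n" using a' nq by simp
        also have "\<dots> = g" unfolding g_def by simp
        finally show ?thesis using gpos by simp
      qed
      have copb: "gcd \<beta>' q = 1"
      proof -
        have "g * gcd \<beta>' q = gcd (g * \<beta>') (g * q)" using gcd_mult_distrib_int[of g \<beta>' q] gpos by simp
        also have "\<dots> = gcd \<beta> n" using b' nq by simp
        also have "\<dots> = g" unfolding gg g2_def by simp
        finally show ?thesis using gpos by simp
      qed
      have qodd: "odd q" using nodd nq by auto
      have ndv: "n dvd g * x" if "q dvd x" for x using that nq by simp
      show ?thesis
      proof (cases "q = 5")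
        case True
        then show ?thesis using nq gb a' by auto
      next
        case q5: False
        obtain u v0 where uv: "u * \<alpha>' + v0 * q = 1" using bezout_int[of \<alpha>' q] copa by auto
        define \<gamma> where "\<gamma> = (\<beta>' * u) mod q"
        have g0: "0 \<le> \<gamma>" "\<gamma> < q" unfolding \<gamma>_def using qpos by auto
        have qg: "q dvd (\<beta>' * u - \<gamma>)" unfolding \<gamma>_def by (simp add: minus_mod_eq_mult_div)
        have key: "q dvd (\<beta>' - \<gamma> * \<alpha>')"
        proof -
          have "\<beta>' - \<gamma> * \<alpha>' = \<beta>' * (u * \<alpha>' + v0 * q) - \<gamma> * \<alpha>'" using uv by simp
          also have "\<dots> = \<alpha>' * (\<beta>' * u - \<gamma>) + (\<beta>' * v0) * q" by (simp add: algebra_simps)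
          finally show ?thesis using qg by simp
        qed
        have gne0: "\<gamma> \<noteq> 0"
        proof
          assume "\<gamma> = 0"
          then have "q dvd \<beta>'" using key by simp
          then have "n dvd \<beta>" using ndv b' by simp
          then show False using nb by simp
        qed
        have gne1: "\<gamma> \<noteq> 1"
        proof
          assume "\<gamma> = 1"
          then have "q dvd \<beta>' - \<alpha>'" using key by simp
          then have "n dvd g * (\<beta>' - \<alpha>')" using ndv by simp
          then have "n dvd \<beta> - \<alpha>" using a' b' by (simp add: algebra_simps)
          then have "n dvd \<alpha> - \<beta>" by (simp add: dvd_diff_commute)
          then show False using nab by simp
        qed
        have gne2: "\<gamma> \<noteq> q - 1"
        proof
          assume "\<gamma> = q - 1"
          then have "q dvd \<beta>' - (q - 1) * \<alpha>'" using key by simp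
          moreover have "\<beta>' - (q - 1) * \<alpha>' = (\<beta>' + \<alpha>') - q * \<alpha>'" by (simp add: algebra_simps)
          ultimately have "q dvd ((\<beta>' + \<alpha>') - q * \<alpha>') + q * \<alpha>'" by (intro dvd_add) simp_all
          then have "q dvd \<beta>' + \<alpha>'" by simp
          then have "n dvd g * (\<beta>' + \<alpha>')" using ndv by simp
          then have "n dvd \<alpha> + \<beta>" using a' b' by (simp add: algebra_simps)
          then show False using nab2 by simp
        qed
        define c where "c = min \<gamma> (q - \<gamma>)"
        have c2: "2 \<le> c" unfolding c_def using g0 gne0 gne1 gne2 by auto
        have cq: "2 * c \<le> q - 1"
        proof -
          have "2 * c \<le> q" unfolding c_def min_def by auto
          moreover have "2 * c \<noteq> q" using qodd by auto
          ultimately show ?thesis by linarith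
        qed
        have q6: "q \<noteq> 6" using qodd by auto
        have q7: "7 \<le> q" using c2 cq q5 q6 by linarith
        obtain j where j: "inM q j" "inM q (c * j)" using walk[OF q7 qodd c2 cq] by blast
        define s where "s = u * j"
        have "inM q (\<alpha>' * u * j)"
        proof (rule inM_dvd[OF _ j(1)])
          have e1: "\<alpha>' * u - 1 = - (v0 * q)" using uv by (simp add: algebra_simps)
          have "\<alpha>' * u * j - j = (\<alpha>' * u - 1) * j" by (simp add: algebra_simps)
          also have "\<dots> = (- (v0 * q)) * j" by (simp only: e1)
          also have "\<dots> = (- v0 * j) * q" by (simp add: algebra_simps)
          finally have "\<alpha>' * u * j - j = (- v0 * j) * q" .
          then show "q dvd \<alpha>' * u * j - j" by simp
        qed
        then have A: "inM n (\<alpha> * s)" using inM_scale[OF gpos, of q "\<alpha>' * u * j"] nq a'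
          unfolding s_def by (simp add: algebra_simps)
        have gj: "inM q (\<gamma> * j)"
        proof (cases "c = \<gamma>")
          case True then show ?thesis using j by simp
        next
          case False
          then have cg: "c = q - \<gamma>" unfolding c_def by auto
          have "inM q (- (c * j))" using inM_neg[OF qpos j(2)] .
          moreover have "\<gamma> * j - (- (c * j)) = j * q"
          proof -
            have "\<gamma> * j - (- (c * j)) = (\<gamma> + c) * j" by (simp add: algebra_simps)
            also have "\<gamma> + c = q" using cg by simp
            finally show ?thesis by (simp add: mult.commute)
          qed
          ultimately show ?thesis using inM_dvd[of q "\<gamma> * j" "- (c * j)"] by simp
        qed
        have "inM q (\<beta>' * u * j)"
        proof (rule inM_dvd[OF _ gj])
          have "\<beta>' * u * j - \<gamma> * j = (\<beta>' * u - \<gamma>) * j" by (simp add: algebra_simps)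
          then show "q dvd \<beta>' * u * j - \<gamma> * j" using qg by simp
        qed
        then have B: "inM n (\<beta> * s)" using inM_scale[OF gpos, of q "\<beta>' * u * j"] nq b'
          unfolding s_def by (simp add: algebra_simps)
        show ?thesis using A B by blast
      qed
    qed
  qed
qed



definition pos5 :: "nat \<Rightarrow> nat" where
  "pos5 i = (if even i then i div 2 else 5 + ((i + 5) mod 10) div 2)"

definition A5 :: "nat \<Rightarrow> nat \<Rightarrow> bool" where
  "A5 p p' \<longleftrightarrow> p \<noteq> p' \<and> ((p < 5 \<and> p' < 5) \<or> (5 \<le> p \<and> 5 \<le> p') \<or> p' = p + 5 \<or> p = p' + 5)"

lemma ten: "(a::nat) < 10 \<Longrightarrow> a = 0 \<or> a = 1 \<or> a = 2 \<or> a = 3 \<or> a = 4 \<or> a = 5 \<or> a = 6 \<or> a = 7 \<or> a = 8 \<or> a = 9"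
  by presburger

lemma fin5:
  assumes "a < 10" "b < 10"
  shows "((if a \<le> b then b - a else a - b) \<in> {2,4,5,6,8}) \<longleftrightarrow> A5 (pos5 a) (pos5 b)"
  using ten[OF assms(1)] ten[OF assms(2)] by (elim disjE) (simp_all add: pos5_def A5_def)

lemma pos5_lt: assumes "a < 10" shows "pos5 a < 10"
  using ten[OF assms] by (elim disjE) (simp_all add: pos5_def)

lemma pos5_inj: assumes "a < 10" "b < 10" "pos5 a = pos5 b" shows "a = b"
  using ten[OF assms(1)] ten[OF assms(2)] assms(3) by (elim disjE) (simp_all add: pos5_def)

lemma k5_adj:
  fixes k u v :: nat
  assumes k: "0 < k" and u: "u < 10 * k" and v: "v < 10 * k"
  shows "circulant_adj (10 * k) {2 * k, 4 * k, 5 * k} u v \<longleftrightarrow>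
         u mod k = v mod k \<and> A5 (pos5 (u div k)) (pos5 (v div k))"
proof -
  define d where "d = (if u \<le> v then v - u else u - v)"
  have dlt: "d < 10 * k" unfolding d_def using u v by auto
  have cd: "circ_dist (10 * k) u v = min d (10 * k - d)" unfolding circ_dist_def d_def Let_def by simp
  have S1: "circulant_adj (10 * k) {2 * k, 4 * k, 5 * k} u v \<longleftrightarrow>
            d = 2 * k \<or> d = 4 * k \<or> d = 5 * k \<or> d = 6 * k \<or> d = 8 * k"
    unfolding circulant_adj_def cd using dlt by (auto simp: min_def)
  define a where "a = u div k"
  define b where "b = v div k"
  have a10: "a < 10" unfolding a_def using u k by (simp add: less_mult_imp_div_less mult.commute)
  have b10: "b < 10" unfolding b_def using v k by (simp add: less_mult_imp_div_less mult.commute)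
  have ua: "u = a * k + u mod k" unfolding a_def by simp
  have vb: "v = b * k + v mod k" unfolding b_def by simp
  define da where "da = (if a \<le> b then b - a else a - b)"
  show ?thesis
  proof (cases "u mod k = v mod k")
    case True
    have "d = da * k"
    proof (cases "a \<le> b")
      case True
      then have "u \<le> v" using ua vb \<open>u mod k = v mod k\<close> by (metis add_le_cancel_right mult_le_mono1)
      then have "d = v - u" unfolding d_def by simp
      also have "\<dots> = b * k - a * k" using ua vb \<open>u mod k = v mod k\<close> by simp
      also have "\<dots> = (b - a) * k" by (simp add: diff_mult_distrib)
      finally show ?thesis unfolding da_def using True by simp
    next
      case False
      then have "v \<le> u" using ua vb \<open>u mod k = v mod k\<close> by (metis add_le_cancel_right mult_le_mono1 nat_le_linear)
      then have "d = u - v" unfolding d_def using False by (cases "u = v") auto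
      also have "\<dots> = a * k - b * k" using ua vb \<open>u mod k = v mod k\<close> by simp
      also have "\<dots> = (a - b) * k" by (simp add: diff_mult_distrib)
      finally show ?thesis unfolding da_def using False by simp
    qed
    then have "circulant_adj (10 * k) {2 * k, 4 * k, 5 * k} u v \<longleftrightarrow> da \<in> {2,4,5,6,8}"
      unfolding S1 using k by auto
    also have "\<dots> \<longleftrightarrow> A5 (pos5 a) (pos5 b)" unfolding da_def by (rule fin5[OF a10 b10])
    finally show ?thesis using True unfolding a_def b_def by simp
  next
    case False
    have "\<not> (d = 2 * k \<or> d = 4 * k \<or> d = 5 * k \<or> d = 6 * k \<or> d = 8 * k)"
    proof
      assume h: "d = 2 * k \<or> d = 4 * k \<or> d = 5 * k \<or> d = 6 * k \<or> d = 8 * k"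
      then obtain m where dm: "d = m * k" by auto
      have "u mod k = v mod k"
      proof (cases "u \<le> v")
        case True
        then have "v = u + m * k" using dm unfolding d_def by simp
        then show ?thesis by simp
      next
        case False
        then have "u = v + m * k" using dm unfolding d_def by simp
        then show ?thesis by simp
      qed
      then show False using False by simp
    qed
    then show ?thesis using S1 False by simp
  qed
qed

lemma k5_wr:
  fixes k :: nat
  assumes k: "0 < k"
  shows "word_representable {0..<10 * k} (circulant_adj (10 * k) {2 * k, 4 * k, 5 * k})"
proof -
  define E where "E = circulant_adj (10 * k) {2 * k, 4 * k, 5 * k}"
  define P where "P = (\<lambda>v. pos5 (v div k))"
  define cm where "cm = (\<lambda>v::nat. v mod k)"
  define \<kappa> where "\<kappa> = (\<lambda>v. int (10 * cm v + P v))"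
  have P10: "P v < 10" if "v \<in> {0..<10 * k}" for v
    unfolding P_def using that k by (intro pos5_lt) (simp add: less_mult_imp_div_less mult.commute)
  have Eiff: "E u v \<longleftrightarrow> cm u = cm v \<and> A5 (P u) (P v)" if "u \<in> {0..<10 * k}" "v \<in> {0..<10 * k}" for u v
    unfolding E_def cm_def P_def using k5_adj[OF k] that by simp
  have kless: "\<kappa> u < \<kappa> v \<longleftrightarrow> cm u < cm v \<or> (cm u = cm v \<and> P u < P v)"
    if "u \<in> {0..<10 * k}" "v \<in> {0..<10 * k}" for u v
    using P10[OF that(1)] P10[OF that(2)] unfolding \<kappa>_def by auto
  show ?thesis unfolding E_def[symmetric]
  proof (rule core)
    show "finite {0..<10 * k}" by simp
    show "inj_on \<kappa> {0..<10 * k}"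
    proof (rule inj_onI)
      fix u v assume uv: "u \<in> {0..<10 * k}" "v \<in> {0..<10 * k}" "\<kappa> u = \<kappa> v"
      have eq: "10 * cm u + P u = 10 * cm v + P v" using uv(3) unfolding \<kappa>_def by (simp only: of_nat_eq_iff)
      have "cm u = cm v \<and> P u = P v" using P10[OF uv(1)] P10[OF uv(2)] eq by presburger
      then have "u mod k = v mod k" "pos5 (u div k) = pos5 (v div k)" unfolding cm_def P_def by auto
      moreover have "u div k < 10" "v div k < 10" using uv k by (simp_all add: less_mult_imp_div_less mult.commute)
      ultimately have "u div k = v div k" "u mod k = v mod k" using pos5_inj by auto
      then show "u = v" by (metis div_mult_mod_eq)
    qed
    show "E y x" if "E x y" for x y using that circ_adj_sym unfolding E_def by metis
  next
    fix x y assume xV: "x \<in> {0..<10 * k}" and yV: "y \<in> {0..<10 * k}" and xy: "x \<noteq> y"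
      and ne: "\<not> E x y" and kxy: "\<kappa> x < \<kappa> y"
    have eo: "cm u = cm v \<and> P u < P v \<and> A5 (P u) (P v)"
      if "u \<in> {0..<10 * k}" "v \<in> {0..<10 * k}" "E u v" "\<kappa> u < \<kappa> v" for u v
      using Eiff[OF that(1,2)] kless[OF that(1,2)] that(3,4) by auto
    show "\<exists>cl. edgeok {0..<10 * k} E \<kappa> cl \<and> brk cl x y"
    proof (cases "cm x = cm y")
      case False
      define cl where "cl = (\<lambda>v. if cm v = cm x then 1 else 0 :: nat)"
      have "edgeok {0..<10 * k} E \<kappa> cl" unfolding edgeok_def cl_def using eo by auto
      moreover have "brk cl x y" unfolding brk_def cl_def using False by auto
      ultimately show ?thesis by blast
    next
      case True
      have Pxy: "P x < P y" using kless[OF xV yV] kxy True by auto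
      have nA: "\<not> A5 (P x) (P y)" using Eiff[OF xV yV] ne True by auto
      have px5: "P x < 5" "5 \<le> P y" "P y \<noteq> P x + 5" using nA Pxy unfolding A5_def by auto
      show ?thesis
      proof (cases "P x + 5 < P y")
        case True
        define cl where "cl = (\<lambda>v. if cm v = cm x \<and> P v \<le> P x then 0
                                   else if cm v = cm x \<and> P y \<le> P v then 2 else 1 :: nat)"
        have "edgeok {0..<10 * k} E \<kappa> cl"
          unfolding edgeok_def
        proof (intro conjI ballI impI)
          fix v show "cl v \<le> 2" unfolding cl_def by auto
        next
          fix u v assume uv: "u \<in> {0..<10 * k}" "v \<in> {0..<10 * k}" "E u v" "\<kappa> u < \<kappa> v"
          have e: "cm u = cm v" "P u < P v" "A5 (P u) (P v)" using eo[OF uv] by auto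
          show "cl v = cl u \<or> cl v = Suc (cl u)"
            using e True px5 unfolding cl_def A5_def by auto
        qed
        moreover have "brk cl x y" unfolding brk_def cl_def using Pxy \<open>cm x = cm y\<close> by auto
        ultimately show ?thesis by blast
      next
        case False
        define cl where "cl = (\<lambda>v. if cm v = cm x \<and> P x \<le> P v \<and> (P v < 5 \<or> P x + 5 \<le> P v) then 1 else 0 :: nat)"
        have "edgeok {0..<10 * k} E \<kappa> cl"
          unfolding edgeok_def
        proof (intro conjI ballI impI)
          fix v show "cl v \<le> 2" unfolding cl_def by auto
        next
          fix u v assume uv: "u \<in> {0..<10 * k}" "v \<in> {0..<10 * k}" "E u v" "\<kappa> u < \<kappa> v"
          have e: "cm u = cm v" "P u < P v" "A5 (P u) (P v)" using eo[OF uv] by auto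
          show "cl v = cl u \<or> cl v = Suc (cl u)"
            using e unfolding cl_def A5_def by auto
        qed
        moreover have "brk cl x y" unfolding brk_def cl_def using Pxy px5 False \<open>cm x = cm y\<close> by auto
        ultimately show ?thesis by blast
      qed
    qed
  qed
qed



lemma odd_mult_mod:
  fixes d n :: nat
  assumes "odd d" "0 < n"
  shows "(int d * int n) mod (2 * int n) = int n"
proof -
  obtain e where "d = 2 * e + 1" using assms(1) oddE by blast
  then have "int d * int n = int n + int e * (2 * int n)" by (simp add: algebra_simps)
  then have "(int d * int n) mod (2 * int n) = int n mod (2 * int n)" by simp
  also have "\<dots> = int n" using assms(2) by simp
  finally show ?thesis .
qed

lemma n_mult_odd_mod:
  fixes n :: nat and t :: int
  assumes "odd t" "0 < n"
  shows "(int n * t) mod (2 * int n) = int n"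
proof -
  obtain e where "t = 2 * e + 1" using assms(1) oddE by blast
  then have "int n * t = int n + e * (2 * int n)" by (simp add: algebra_simps)
  then have "(int n * t) mod (2 * int n) = int n mod (2 * int n)" by simp
  also have "\<dots> = int n" using assms(2) by simp
  finally show ?thesis .
qed

theorem theorem17:
  fixes n a b :: nat
  assumes "odd n"
    and "0 < a" and "a < n" and "0 < b" and "b < n" and "a \<noteq> b"
    and "even a \<longleftrightarrow> even b"
  shows "word_representable {0..<2*n} (circulant_adj (2*n) {a, b, n})"
proof -
  have npos: "0 < n" using assms by simp
  show ?thesis
  proof (cases "odd a")
    case True
    then have ob: "odd b" using assms(7) by simp
    show ?thesis
    proof (rule circ_wr[OF npos, of a b "int n"])
      fix d assume "d \<in> {a, b, n}"
      then have "odd d" using True ob assms(1) by auto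
      then have "(int d * int n) mod (2 * int n) = int n" using odd_mult_mod npos by simp
      then show "2 * int n < 4 * ((int d * int n) mod (2 * int n)) \<and> 4 * ((int d * int n) mod (2 * int n)) < 6 * int n"
        using npos by simp
    qed
  next
    case False
    then have ea: "even a" and eb: "even b" using assms(7) by auto
    obtain a1 where a1: "a = 2 * a1" using ea by blast
    obtain b1 where b1: "b = 2 * b1" using eb by blast
    have n1: "1 < int n" using assms(2,3) a1 by simp
    have na: "\<not> int n dvd int a1"
    proof
      assume "int n dvd int a1"
      then have "n dvd a1" by simp
      moreover have "0 < a1" "a1 < n" using assms(2,3) a1 by auto
      ultimately show False using nat_dvd_not_less by blast
    qed
    have nb: "\<not> int n dvd int b1"
    proof
      assume "int n dvd int b1"
      then have "n dvd b1" by simp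
      moreover have "0 < b1" "b1 < n" using assms(4,5) b1 by auto
      ultimately show False using nat_dvd_not_less by blast
    qed
    have nab: "\<not> int n dvd (int a1 - int b1)"
    proof
      assume h: "int n dvd (int a1 - int b1)"
      have "a1 \<noteq> b1" using assms(6) a1 b1 by auto
      then have "0 < \<bar>int a1 - int b1\<bar>" by simp
      moreover have "\<bar>int a1 - int b1\<bar> < int n" using assms(3,5) a1 b1 by auto
      moreover have "int n dvd \<bar>int a1 - int b1\<bar>" using h by simp
      ultimately show False using zdvd_imp_le by fastforce
    qed
    have nab2: "\<not> int n dvd (int a1 + int b1)"
    proof
      assume h: "int n dvd (int a1 + int b1)"
      have "0 < int a1 + int b1" using assms(2) a1 by simp
      moreover have "int a1 + int b1 < int n" using assms(1,3,5) a1 b1 by presburger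
      ultimately show False using h zdvd_imp_le by fastforce
    qed
    have oddn: "odd (int n)" using assms(1) by simp
    from NTmain[OF oddn n1 na nb nab nab2]
    show ?thesis
    proof
      assume "\<exists>s. inM (int n) (int a1 * s) \<and> inM (int n) (int b1 * s)"
      then obtain s where s: "inM (int n) (int a1 * s)" "inM (int n) (int b1 * s)" by blast
      define t where "t = (if odd s then s else s + int n)"
      have todd: "odd t" unfolding t_def using assms(1) by auto
      have tmod: "(x * t) mod int n = (x * s) mod int n" for x
      proof (cases "odd s")
        case True then show ?thesis unfolding t_def by simp
      next
        case False
        then have "x * t = x * s + x * int n" unfolding t_def by (simp add: algebra_simps)
        then show ?thesis by simp
      qed
      have key: "2 * int n < 4 * ((int (2 * c) * t) mod (2 * int n)) \<and>
                 4 * ((int (2 * c) * t) mod (2 * int n)) < 6 * int n"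
        if "inM (int n) (int c * s)" for c
      proof -
        have "(int (2 * c) * t) mod (2 * int n) = 2 * ((int c * t) mod int n)"
          using mod_mult_mult1[of 2 "int c * t" "int n"] by (simp add: algebra_simps)
        also have "\<dots> = 2 * ((int c * s) mod int n)" using tmod by simp
        finally show ?thesis using that unfolding inM_def by simp
      qed
      show ?thesis
      proof (rule circ_wr[OF npos, of a b t])
        fix d assume "d \<in> {a, b, n}"
        then consider "d = a" | "d = b" | "d = n" by auto
        then show "2 * int n < 4 * ((int d * t) mod (2 * int n)) \<and> 4 * ((int d * t) mod (2 * int n)) < 6 * int n"
        proof cases
          case 1 then show ?thesis using key[OF s(1)] a1 by simp
        next
          case 2 then show ?thesis using key[OF s(2)] b1 by simp
        next
          case 3 then show ?thesis using n_mult_odd_mod[OF todd npos] npos by simp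
        qed
      qed
    next
      assume "\<exists>g. int n = 5 * g \<and> g dvd int a1 \<and> g dvd int b1"
      then obtain g where g: "int n = 5 * g" "g dvd int a1" "g dvd int b1" by blast
      have gpos: "0 < g" using g(1) npos by simp
      define k where "k = nat g"
      have kg: "int k = g" unfolding k_def using gpos by simp
      have nk: "n = 5 * k" using g(1) kg by simp
      have kpos: "0 < k" using gpos kg by simp
      have "k dvd a1" using g(2) unfolding kg[symmetric] by simp
      then obtain i where i: "a1 = k * i" by blast
      have "k dvd b1" using g(3) unfolding kg[symmetric] by simp
      then obtain j where j: "b1 = k * j" by blast
      have i12: "i = 1 \<or> i = 2"
      proof -
        have "0 < i" using assms(2) a1 i by (cases i) auto
        moreover have "k * (2 * i) < k * 5" using assms(3) a1 i nk by (simp add: algebra_simps)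
        then have "2 * i < 5" using kpos by simp
        ultimately show ?thesis by auto
      qed
      have j12: "j = 1 \<or> j = 2"
      proof -
        have "0 < j" using assms(4) b1 j by (cases j) auto
        moreover have "k * (2 * j) < k * 5" using assms(5) b1 j nk by (simp add: algebra_simps)
        then have "2 * j < 5" using kpos by simp
        ultimately show ?thesis by auto
      qed
      have ij: "i \<noteq> j" using assms(6) a1 b1 i j by auto
      have R: "{a, b, n} = {2 * k, 4 * k, 5 * k}"
        using i12 j12 ij a1 b1 i j nk by auto
      have "2 * n = 10 * k" using nk by simp
      then show ?thesis using R k5_wr[OF kpos] by simp
    qed
  qed
qed

end
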